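(* Let $\mathbb K$ be an algebraically closed field and $n\ge 1$. For every integer $\mu$ with $0\le\mu\le\lfloor n/2\rfloor$, the closure of $\mathcal P^\mu_n$ in $\mathcal P_n$ (with the topology induced by the Zariski topology of $\mathbb K[t]_n^3\cong\mathbb A^{3n+3}$) equals $\mathcal P^0_n\cup\mathcal P^1_n\cup\dots\cup\mathcal P^\mu_n$. Equivalently, for $\mu<\lfloor n/2\rfloor$, every element of $\mathcal P^\mu_n$ lies in the closure of $\mathcal P^{\mu+1}_n$.
   Context: For a field $F$ and $a,b,c\in F[t]$, $\mathrm{Syz}(a,b,c)=\{(A,B,C)\in F[t]^3: Aa+Bb+Cc=0\}$, $\deg(A,B,C)=\max\{\deg A,\deg B,\deg C\}$, and the class is $\mu(a,b,c)=\min\{\deg(A,B,C): (A,B,C)\in \mathrm{Syz}(a,b,c)\setminus\{0\}\}$. $\mathbb K[t]_n$ denotes polynomials of degree $\le n$; $\mathcal P_n\subset \mathbb K[t]_n^3$ is the set of triples $(a,b,c)$ with $c\neq 0$, $\gcd(a,b,c)=1$ and $\max\{\deg a,\deg b,\deg c\}=n$; $\mathcal P^\mu_n=\{(a,b,c)\in\mathcal P_n:\mu(a,b,c)=\mu\}$. It is known that $\mathcal P_n=\mathcal P^0_n\cup\dots\cup\mathcal P^{\lfloor n/2\rfloor}_n$. *)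

theory Defs
  imports "HOL-Computational_Algebra.Polynomial"
begin

type_synonym 'a triple = "'a poly \<times> 'a poly \<times> 'a poly"

definition Syz :: "'a::comm_ring_1 poly \<Rightarrow> 'a poly \<Rightarrow> 'a poly \<Rightarrow> 'a triple set" where
  "Syz a b c = {(A, B, C). A * a + B * b + C * c = 0}"

definition tdeg :: "'a::zero triple \<Rightarrow> nat" where
  "tdeg x = (case x of (A, B, C) \<Rightarrow> max (degree A) (max (degree B) (degree C)))"

definition mu :: "'a::comm_ring_1 poly \<Rightarrow> 'a poly \<Rightarrow> 'a poly \<Rightarrow> nat" where
  "mu a b c = (LEAST d. \<exists>s \<in> Syz a b c - {(0, 0, 0)}. tdeg s = d)"

definition Kn3 :: "nat \<Rightarrow> 'a::zero triple set" where
  "Kn3 n = {(a, b, c). degree a \<le> n \<and> degree b \<le> n \<and> degree c \<le> n}"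

definition coprime3 :: "'a::field poly \<Rightarrow> 'a poly \<Rightarrow> 'a poly \<Rightarrow> bool" where
  "coprime3 a b c \<longleftrightarrow> (\<forall>d. d dvd a \<and> d dvd b \<and> d dvd c \<longrightarrow> is_unit d)"

definition Pn :: "nat \<Rightarrow> 'a::field triple set" where
  "Pn n = {(a, b, c). c \<noteq> 0 \<and> coprime3 a b c \<and> max (degree a) (max (degree b) (degree c)) = n}"

definition Pmu :: "nat \<Rightarrow> nat \<Rightarrow> 'a::field triple set" where
  "Pmu n m = {(a, b, c) \<in> Pn n. mu a b c = m}"

text \<open>Polynomial functions on K[t]_n^3 = A^(3n+3), in the coordinates given by the
  coefficients of a, b, c of index 0..n.\<close>
inductive_set polyfun :: "nat \<Rightarrow> ('a::comm_ring_1 triple \<Rightarrow> 'a) set" for n where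
  const: "(\<lambda>_. k) \<in> polyfun n"
| coord_a: "i \<le> n \<Longrightarrow> (\<lambda>(a, b, c). coeff a i) \<in> polyfun n"
| coord_b: "i \<le> n \<Longrightarrow> (\<lambda>(a, b, c). coeff b i) \<in> polyfun n"
| coord_c: "i \<le> n \<Longrightarrow> (\<lambda>(a, b, c). coeff c i) \<in> polyfun n"
| add: "f \<in> polyfun n \<Longrightarrow> g \<in> polyfun n \<Longrightarrow> (\<lambda>x. f x + g x) \<in> polyfun n"
| mult: "f \<in> polyfun n \<Longrightarrow> g \<in> polyfun n \<Longrightarrow> (\<lambda>x. f x * g x) \<in> polyfun n"

definition zariski_closed :: "nat \<Rightarrow> 'a::comm_ring_1 triple set \<Rightarrow> bool" where
  "zariski_closed n Z \<longleftrightarrow> (\<exists>F \<subseteq> polyfun n. Z = {x \<in> Kn3 n. \<forall>f \<in> F. f x = 0})"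

definition zariski_closure_in :: "nat \<Rightarrow> 'a::comm_ring_1 triple set \<Rightarrow> 'a triple set \<Rightarrow> 'a triple set" where
  "zariski_closure_in n Y S = \<Inter> {Y \<inter> Z | Z. zariski_closed n Z \<and> S \<subseteq> Y \<inter> Z}"

end

theory Submission
  imports Defs "Jordan_Normal_Form.Determinant"
begin

definition Dep :: "(nat \<Rightarrow> nat \<Rightarrow> 'a::field) \<Rightarrow> nat \<Rightarrow> nat \<Rightarrow> bool" where
  "Dep M N k \<longleftrightarrow> (\<exists>c. (\<exists>j<k. c j \<noteq> 0) \<and> (\<forall>r<N. (\<Sum>j<k. M r j * c j) = 0))"

definition GL :: "(nat \<Rightarrow> nat \<Rightarrow> 'a::comm_ring_1) \<Rightarrow> (nat \<Rightarrow> nat \<Rightarrow> 'a) \<Rightarrow> nat \<Rightarrow> nat \<Rightarrow> 'a mat" where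
  "GL L M N k = mat k k (\<lambda>(i,j). \<Sum>r<N. L i r * M r j)"

lemma Dep_det:
  fixes M :: "nat \<Rightarrow> nat \<Rightarrow> 'a::field"
  assumes "Dep M N k" shows "det (GL L M N k) = 0"
proof -
  obtain c where c1: "\<exists>j<k. c j \<noteq> 0" and c2: "\<forall>r<N. (\<Sum>j<k. M r j * c j) = 0"
    using assms unfolding Dep_def by blast
  have car: "GL L M N k \<in> carrier_mat k k" unfolding GL_def by simp
  have v1: "vec k c \<in> carrier_vec k" by simp
  have v2: "vec k c \<noteq> 0\<^sub>v k"
  proof
    assume "vec k c = 0\<^sub>v k"
    then have "\<forall>j<k. c j = 0" by (metis index_vec index_zero_vec(1))
    with c1 show False by blast
  qed
  have v3: "GL L M N k *\<^sub>v vec k c = 0\<^sub>v k"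
  proof (rule eq_vecI)
    show "dim_vec (GL L M N k *\<^sub>v vec k c) = dim_vec (0\<^sub>v k)" unfolding GL_def by simp
    fix i assume i: "i < dim_vec (0\<^sub>v k)"
    then have ik: "i < k" by simp
    have "(GL L M N k *\<^sub>v vec k c) $ i = (\<Sum>j<k. (\<Sum>r<N. L i r * M r j) * c j)"
      using ik unfolding GL_def
      by (auto simp add: scalar_prod_def row_def lessThan_atLeast0 intro!: sum.cong)
    also have "\<dots> = (\<Sum>r<N. L i r * (\<Sum>j<k. M r j * c j))"
      by (simp add: sum_distrib_left sum_distrib_right mult.assoc) (rule sum.swap)
    also have "\<dots> = 0" using c2 by simp
    finally show "(GL L M N k *\<^sub>v vec k c) $ i = 0\<^sub>v k $ i" using ik by simp
  qed
  show ?thesis using det_0_iff_vec_prod_zero_field[OF car] v1 v2 v3 by blast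
qed

lemma left_inv:
  fixes M :: "nat \<Rightarrow> nat \<Rightarrow> 'a::field"
  shows "\<not> Dep M N k \<Longrightarrow> \<exists>L. \<forall>i<k. \<forall>j<k. (\<Sum>r<N. L i r * M r j) = (if i = j then 1 else 0)"
proof (induction k)
  case 0
  then show ?case by auto
next
  case (Suc k)
  have nd: "\<not> Dep M N k"
  proof
    assume "Dep M N k"
    then obtain c where c1: "\<exists>j<k. c j \<noteq> 0" and c2: "\<forall>r<N. (\<Sum>j<k. M r j * c j) = 0"
      unfolding Dep_def by blast
    define c' where "c' j = (if j < k then c j else 0)" for j
    have "\<exists>j<Suc k. c' j \<noteq> 0" using c1 unfolding c'_def by auto
    moreover have "\<forall>r<N. (\<Sum>j<Suc k. M r j * c' j) = 0"
      using c2 by (simp add: c'_def)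
    ultimately have "Dep M N (Suc k)" unfolding Dep_def by blast
    with Suc.prems show False by blast
  qed
  obtain L' where L': "\<forall>i<k. \<forall>j<k. (\<Sum>r<N. L' i r * M r j) = (if i = j then 1 else 0)"
    using Suc.IH[OF nd] by blast
  define a where "a j = (\<Sum>r<N. L' j r * M r k)" for j
  define w where "w r = M r k - (\<Sum>j<k. M r j * a j)" for r
  have "\<exists>r0<N. w r0 \<noteq> 0"
  proof (rule ccontr)
    assume "\<not> (\<exists>r0<N. w r0 \<noteq> 0)"
    then have w0: "\<forall>r<N. w r = 0" by blast
    define c where "c j = (if j < k then - a j else 1)" for j
    have "\<exists>j<Suc k. c j \<noteq> 0" by (rule exI[of _ k]) (simp add: c_def)
    moreover have "\<forall>r<N. (\<Sum>j<Suc k. M r j * c j) = 0"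
    proof (intro allI impI)
      fix r assume r: "r < N"
      have "(\<Sum>j<Suc k. M r j * c j) = (\<Sum>j<k. M r j * c j) + M r k"
        by (simp add: c_def)
      also have "(\<Sum>j<k. M r j * c j) = - (\<Sum>j<k. M r j * a j)"
        by (simp add: c_def sum_negf[symmetric])
      finally show "(\<Sum>j<Suc k. M r j * c j) = 0" using w0 r unfolding w_def by simp
    qed
    ultimately have "Dep M N (Suc k)" unfolding Dep_def by blast
    with Suc.prems show False by blast
  qed
  then obtain r0 where r0: "r0 < N" "w r0 \<noteq> 0" by blast
  define l where "l r = ((if r = r0 then 1 else 0) - (\<Sum>j<k. M r0 j * L' j r)) / w r0" for r
  have key: "(\<Sum>r<N. l r * M r j) = (M r0 j - (\<Sum>j'<k. M r0 j' * (\<Sum>r<N. L' j' r * M r j))) / w r0" for j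
  proof -
    have "(\<Sum>r<N. l r * M r j) = (\<Sum>r<N. (if r = r0 then 1 else 0) * M r j - (\<Sum>j'<k. M r0 j' * L' j' r) * M r j) / w r0"
      unfolding l_def by (simp add: sum_divide_distrib left_diff_distrib)
    also have "(\<Sum>r<N. (if r = r0 then 1 else 0) * M r j - (\<Sum>j'<k. M r0 j' * L' j' r) * M r j)
       = (\<Sum>r<N. (if r = r0 then 1 else 0) * M r j) - (\<Sum>r<N. (\<Sum>j'<k. M r0 j' * L' j' r) * M r j)"
      by (simp add: sum_subtractf)
    also have "(\<Sum>r<N. (if r = r0 then 1 else 0) * M r j) = (\<Sum>r<N. if r = r0 then M r j else 0)"
      by (intro sum.cong) auto
    also have "\<dots> = M r0 j"
      using r0 by simp
    also have "(\<Sum>r<N. (\<Sum>j'<k. M r0 j' * L' j' r) * M r j) = (\<Sum>j'<k. M r0 j' * (\<Sum>r<N. L' j' r * M r j))"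
      by (simp add: sum_distrib_left sum_distrib_right mult.assoc) (rule sum.swap)
    finally show ?thesis .
  qed
  have lj: "(\<Sum>r<N. l r * M r j) = 0" if j: "j < k" for j
  proof -
    have "(\<Sum>j'<k. M r0 j' * (\<Sum>r<N. L' j' r * M r j)) = (\<Sum>j'<k. M r0 j' * (if j' = j then 1 else 0))"
      using L' j by (intro sum.cong) auto
    also have "\<dots> = M r0 j" using j by (simp add: if_distrib cong: if_cong)
    finally show ?thesis using key[of j] by simp
  qed
  have lk: "(\<Sum>r<N. l r * M r k) = 1"
    using key[of k] r0(2) unfolding w_def a_def by simp
  define L where "L i r = (if i < k then L' i r - a i * l r else l r)" for i r
  show ?case
  proof (rule exI[of _ L], intro allI impI)
    fix i j assume i: "i < Suc k" and j: "j < Suc k"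
    show "(\<Sum>r<N. L i r * M r j) = (if i = j then 1 else 0)"
    proof (cases "i < k")
      case True
      have "(\<Sum>r<N. L i r * M r j) = (\<Sum>r<N. L' i r * M r j) - a i * (\<Sum>r<N. l r * M r j)"
        using True unfolding L_def
        by (simp add: left_diff_distrib sum_subtractf sum_distrib_left mult.assoc)
      moreover have "j < k \<or> j = k" using j by auto
      ultimately show ?thesis
        using True L' lj lk unfolding a_def by auto
    next
      case False
      then have "i = k" using i by simp
      moreover have "j < k \<or> j = k" using j by auto
      ultimately show ?thesis using lj lk unfolding L_def by auto
    qed
  qed
qed

lemma not_Dep_det:
  fixes M :: "nat \<Rightarrow> nat \<Rightarrow> 'a::field"
  assumes "\<not> Dep M N k" shows "\<exists>L. det (GL L M N k) = 1"
proof -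
  obtain L where L: "\<forall>i<k. \<forall>j<k. (\<Sum>r<N. L i r * M r j) = (if i = j then 1 else 0)"
    using left_inv[OF assms] by blast
  have "GL L M N k = 1\<^sub>m k"
    unfolding GL_def by (rule eq_matI) (use L in auto)
  then show ?thesis by (metis det_one)
qed

lemma polyfun_sum:
  "finite S \<Longrightarrow> (\<And>i. i \<in> S \<Longrightarrow> f i \<in> polyfun n) \<Longrightarrow> (\<lambda>x. \<Sum>i\<in>S. f i x) \<in> polyfun n"
proof (induction S rule: finite_induct)
  case empty
  then show ?case using polyfun.const[of 0 n] by simp
next
  case (insert a S)
  then show ?case using polyfun.add[of "f a" n "\<lambda>x. \<Sum>i\<in>S. f i x"] by simp
qed

lemma polyfun_prod:
  "finite S \<Longrightarrow> (\<And>i. i \<in> S \<Longrightarrow> f i \<in> polyfun n) \<Longrightarrow> (\<lambda>x. \<Prod>i\<in>S. f i x) \<in> polyfun n"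
proof (induction S rule: finite_induct)
  case empty
  then show ?case using polyfun.const[of 1 n] by simp
next
  case (insert a S)
  then show ?case using polyfun.mult[of "f a" n "\<lambda>x. \<Prod>i\<in>S. f i x"] by simp
qed

lemma polyfun_det:
  assumes "\<And>i j. i < k \<Longrightarrow> j < k \<Longrightarrow> E i j \<in> polyfun n"
  shows "(\<lambda>x. det (mat k k (\<lambda>(i,j). E i j x))) \<in> polyfun n"
proof -
  have eq: "(\<lambda>x. det (mat k k (\<lambda>(i,j). E i j x))) =
     (\<lambda>x. \<Sum>p\<in>{p. p permutes {0..<k}}. signof p * (\<Prod>i\<in>{0..<k}. E i (p i) x))"
  proof (rule ext)
    fix x
    show "det (mat k k (\<lambda>(i,j). E i j x)) =
     (\<Sum>p\<in>{p. p permutes {0..<k}}. signof p * (\<Prod>i\<in>{0..<k}. E i (p i) x))"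
      by (subst det_def'[of _ k]) (auto intro!: sum.cong prod.cong simp: permutes_in_image)
  qed
  have "(\<lambda>x. \<Sum>p\<in>{p. p permutes {0..<k}}. signof p * (\<Prod>i\<in>{0..<k}. E i (p i) x)) \<in> polyfun n"
  proof (rule polyfun_sum)
    show "finite {p. p permutes {0..<k}}" by (simp add: finite_permutations)
    fix p assume p: "p \<in> {p. p permutes {0..<k}}"
    have "(\<lambda>x. \<Prod>i\<in>{0..<k}. E i (p i) x) \<in> polyfun n"
      by (rule polyfun_prod) (use p assms in \<open>auto simp: permutes_in_image\<close>)
    then show "(\<lambda>x. signof p * (\<Prod>i\<in>{0..<k}. E i (p i) x)) \<in> polyfun n"
      using polyfun.mult[OF polyfun.const[of "signof p"]] by blast
  qed
  then show ?thesis using eq by simp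
qed

lemma closed_Dep:
  fixes M :: "nat \<Rightarrow> nat \<Rightarrow> 'a::field triple \<Rightarrow> 'a"
  assumes "\<And>r j. r < N \<Longrightarrow> j < k \<Longrightarrow> M r j \<in> polyfun n"
  shows "\<exists>F \<subseteq> polyfun n. \<forall>x. Dep (\<lambda>r j. M r j x) N k \<longleftrightarrow> (\<forall>f\<in>F. f x = 0)"
proof -
  let ?F = "range (\<lambda>L x. det (GL L (\<lambda>r j. M r j x) N k))"
  have "?F \<subseteq> polyfun n"
  proof
    fix f assume "f \<in> ?F"
    then obtain L where f: "f = (\<lambda>x. det (GL L (\<lambda>r j. M r j x) N k))" by blast
    have "(\<lambda>x. det (mat k k (\<lambda>(i,j). (\<lambda>i j x. \<Sum>r<N. L i r * M r j x) i j x))) \<in> polyfun n"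
    proof (rule polyfun_det)
      fix i j assume "i < k" "j < k"
      show "(\<lambda>x. \<Sum>r<N. L i r * M r j x) \<in> polyfun n"
        by (rule polyfun_sum) (use \<open>j < k\<close> assms in \<open>auto intro: polyfun.mult polyfun.const\<close>)
    qed
    then show "f \<in> polyfun n" unfolding f GL_def by simp
  qed
  moreover have "\<forall>x. Dep (\<lambda>r j. M r j x) N k \<longleftrightarrow> (\<forall>f\<in>?F. f x = 0)"
  proof (intro allI iffI)
    fix x assume "Dep (\<lambda>r j. M r j x) N k"
    then show "\<forall>f\<in>?F. f x = 0" using Dep_det by fastforce
  next
    fix x assume A: "\<forall>f\<in>?F. f x = 0"
    show "Dep (\<lambda>r j. M r j x) N k"
    proof (rule ccontr)
      assume "\<not> Dep (\<lambda>r j. M r j x) N k"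
      then obtain L where "det (GL L (\<lambda>r j. M r j x) N k) = 1" using not_Dep_det by blast
      with A show False by force
    qed
  qed
  ultimately show ?thesis by blast
qed

lemma divmod_aux1: "u < Suc d \<Longrightarrow> (u + l * Suc d) div Suc d = l"
  by (metis add.commute div_less div_mult_self1 nat.simps(3) plus_nat.add_0)
lemma divmod_aux2: "u < Suc d \<Longrightarrow> (u + l * Suc d) mod Suc d = u"
  by (metis mod_less mod_mult_self1)

lemma sum_mult_prod_nat:
  "(\<Sum>j<A * B. h j) = (\<Sum>i<A. \<Sum>j<B. h (j + i * B))" for A B :: nat
proof (induction A)
  case 0
  then show ?case by simp
next
  case (Suc A)
  have "{..<Suc A * B} = {..<A * B} \<union> (\<lambda>j. j + A * B) ` {..<B}"
  proof (rule equalityI)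
    show "{..<Suc A * B} \<subseteq> {..<A * B} \<union> (\<lambda>j. j + A * B) ` {..<B}"
    proof
      fix x assume x: "x \<in> {..<Suc A * B}"
      show "x \<in> {..<A * B} \<union> (\<lambda>j. j + A * B) ` {..<B}"
      proof (cases "x < A * B")
        case False
        then have "x = (x - A * B) + A * B" "x - A * B < B" using x by auto
        then show ?thesis by blast
      qed simp
    qed
  qed auto
  moreover have "{..<A * B} \<inter> (\<lambda>j. j + A * B) ` {..<B} = {}" by auto
  ultimately have "(\<Sum>j<Suc A * B. h j) = (\<Sum>j<A * B. h j) + (\<Sum>j\<in>(\<lambda>j. j + A * B) ` {..<B}. h j)"
    by (simp add: sum.union_disjoint)
  also have "(\<Sum>j\<in>(\<lambda>j. j + A * B) ` {..<B}. h j) = (\<Sum>j<B. h (j + A * B))"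
    by (subst sum.reindex) (auto simp: inj_on_def)
  finally show ?case using Suc by simp
qed

definition hasSyz :: "nat \<Rightarrow> nat \<Rightarrow> (nat \<Rightarrow> 'a::field poly) \<Rightarrow> bool" where
  "hasSyz d J ys \<longleftrightarrow> (\<exists>As. (\<forall>l<J. degree (As l) \<le> d) \<and> (\<exists>l<J. As l \<noteq> 0) \<and> (\<Sum>l<J. As l * ys l) = 0)"

definition SM :: "nat \<Rightarrow> (nat \<Rightarrow> 'a::comm_ring_1 poly) \<Rightarrow> nat \<Rightarrow> nat \<Rightarrow> 'a" where
  "SM d ys r j = coeff (monom 1 (j mod Suc d) * ys (j div Suc d)) r"

lemma coeff_mult_expand:
  fixes A y :: "'a::comm_ring_1 poly"
  assumes "degree A \<le> d"
  shows "coeff (A * y) r = (\<Sum>u<Suc d. coeff (monom 1 u * y) r * coeff A u)"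
proof -
  have eq: "A = (\<Sum>u\<le>d. monom (coeff A u) u)" using poly_as_sum_of_monoms'[OF assms] by simp
  have "coeff (A * y) r = (\<Sum>u\<le>d. coeff (monom (coeff A u) u * y) r)"
    by (subst (1) eq) (simp only: sum_distrib_right coeff_sum)
  also have "\<dots> = (\<Sum>u<Suc d. coeff (monom 1 u * y) r * coeff A u)"
    unfolding lessThan_Suc_atMost by (intro sum.cong refl) (simp add: coeff_monom_mult)
  finally show ?thesis .
qed

lemma hasSyz_Dep:
  fixes ys :: "nat \<Rightarrow> 'a::field poly"
  assumes deg: "\<And>l. l < J \<Longrightarrow> degree (ys l) \<le> n"
  shows "hasSyz d J ys \<longleftrightarrow> Dep (SM d ys) (n + d + 1) (J * Suc d)"
proof
  assume "hasSyz d J ys"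
  then obtain As where A1: "\<forall>l<J. degree (As l) \<le> d" and A2: "\<exists>l<J. As l \<noteq> 0"
    and A3: "(\<Sum>l<J. As l * ys l) = 0" unfolding hasSyz_def by blast
  define c where "c j = coeff (As (j div Suc d)) (j mod Suc d)" for j
  have "\<exists>j<J * Suc d. c j \<noteq> 0"
  proof -
    obtain l where l: "l < J" "As l \<noteq> 0" using A2 by blast
    let ?u = "degree (As l)"
    have u: "?u < Suc d" using A1 l by auto
    have "?u + l * Suc d < J * Suc d"
    proof -
      have "?u + l * Suc d < Suc d + l * Suc d" using u by simp
      also have "\<dots> = Suc l * Suc d" by simp
      also have "\<dots> \<le> J * Suc d" using l(1) by (intro mult_le_mono1) simp
      finally show ?thesis .
    qed
    moreover have "c (?u + l * Suc d) \<noteq> 0" using u l unfolding c_def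
      by (simp only: divmod_aux1 divmod_aux2) simp
    ultimately show ?thesis by blast
  qed
  moreover have "\<forall>r<n + d + 1. (\<Sum>j<J * Suc d. SM d ys r j * c j) = 0"
  proof (intro allI impI)
    fix r
    have "(\<Sum>j<J * Suc d. SM d ys r j * c j) = (\<Sum>l<J. \<Sum>u<Suc d. SM d ys r (u + l * Suc d) * c (u + l * Suc d))"
      by (rule sum_mult_prod_nat)
    also have "\<dots> = (\<Sum>l<J. \<Sum>u<Suc d. coeff (monom 1 u * ys l) r * coeff (As l) u)"
      unfolding SM_def c_def by (intro sum.cong refl) (simp only: lessThan_iff divmod_aux1 divmod_aux2)
    also have "\<dots> = (\<Sum>l<J. coeff (As l * ys l) r)"
      using A1 by (intro sum.cong refl coeff_mult_expand[symmetric]) auto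
    also have "\<dots> = coeff (\<Sum>l<J. As l * ys l) r" by (simp add: coeff_sum)
    finally show "(\<Sum>j<J * Suc d. SM d ys r j * c j) = 0" using A3 by simp
  qed
  ultimately show "Dep (SM d ys) (n + d + 1) (J * Suc d)" unfolding Dep_def by blast
next
  assume "Dep (SM d ys) (n + d + 1) (J * Suc d)"
  then obtain c where c1: "\<exists>j<J * Suc d. c j \<noteq> 0"
    and c2: "\<forall>r<n + d + 1. (\<Sum>j<J * Suc d. SM d ys r j * c j) = 0" unfolding Dep_def by blast
  define As where "As l = (\<Sum>u<Suc d. monom (c (u + l * Suc d)) u)" for l
  have cA: "coeff (As l) i = (if i < Suc d then c (i + l * Suc d) else 0)" for l i
    unfolding As_def by (simp add: coeff_sum coeff_monom)
  have dA: "degree (As l) \<le> d" for l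
    by (rule degree_le) (simp add: cA)
  have nz: "\<exists>l<J. As l \<noteq> 0"
  proof -
    obtain j where j: "j < J * Suc d" "c j \<noteq> 0" using c1 by blast
    have "j div Suc d < J" using j(1) by (simp add: less_mult_imp_div_less)
    moreover have "coeff (As (j div Suc d)) (j mod Suc d) = c j"
    proof -
      have jm: "j mod Suc d < Suc d" by simp
      show ?thesis by (simp only: cA jm if_True mod_div_mult_eq)
    qed
    ultimately show ?thesis using j(2) by (metis coeff_0)
  qed
  have "(\<Sum>l<J. As l * ys l) = 0"
  proof (rule poly_eqI)
    fix r
    show "coeff (\<Sum>l<J. As l * ys l) r = coeff 0 r"
    proof (cases "r < n + d + 1")
      case True
      have "coeff (\<Sum>l<J. As l * ys l) r = (\<Sum>l<J. coeff (As l * ys l) r)" by (simp add: coeff_sum)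
      also have "\<dots> = (\<Sum>l<J. \<Sum>u<Suc d. coeff (monom 1 u * ys l) r * coeff (As l) u)"
        using dA by (intro sum.cong refl coeff_mult_expand) auto
      also have "\<dots> = (\<Sum>l<J. \<Sum>u<Suc d. SM d ys r (u + l * Suc d) * c (u + l * Suc d))"
        unfolding SM_def by (intro sum.cong refl) (simp only: lessThan_iff divmod_aux1 divmod_aux2 cA if_True)
      also have "\<dots> = (\<Sum>j<J * Suc d. SM d ys r j * c j)"
        by (rule sum_mult_prod_nat[symmetric])
      finally show ?thesis using c2 True by simp
    next
      case False
      have "degree (\<Sum>l<J. As l * ys l) \<le> d + n"
      proof (rule degree_sum_le)
        fix l assume "l \<in> {..<J}"
        then show "degree (As l * ys l) \<le> d + n"
          using degree_mult_le[of "As l" "ys l"] dA[of l] deg[of l] by auto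
      qed simp
      then show ?thesis using False by (simp add: coeff_eq_0)
    qed
  qed
  then show "hasSyz d J ys" unfolding hasSyz_def using dA nz by (intro exI[of _ As]) simp
qed

definition tri :: "'a triple \<Rightarrow> nat \<Rightarrow> 'a poly" where
  "tri x l = (case x of (a, b, c) \<Rightarrow> if l = 0 then a else if l = 1 then b else c)"

definition EE :: "nat \<Rightarrow> nat \<Rightarrow> nat \<Rightarrow> nat \<Rightarrow> 'a::comm_ring_1 triple \<Rightarrow> 'a" where
  "EE n d r j = (let u = j mod Suc d; l = j div Suc d in
     if u \<le> r \<and> r - u \<le> n then
       (if l = 0 then (\<lambda>(a, b, c). coeff a (r - u)) else if l = 1 then (\<lambda>(a, b, c). coeff b (r - u))
        else (\<lambda>(a, b, c). coeff c (r - u)))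
     else (\<lambda>_. 0))"

lemma EE_polyfun: "EE n d r j \<in> polyfun n"
  unfolding EE_def Let_def by (auto intro: polyfun.intros)

lemma EE_alt: "EE n d r j x = (if j mod Suc d \<le> r \<and> r - j mod Suc d \<le> n then coeff (tri x (j div Suc d)) (r - j mod Suc d) else 0)"
proof -
  obtain a b c where x: "x = (a, b, c)" by (cases x) auto
  show ?thesis unfolding EE_def Let_def x tri_def by simp
qed

lemma EE_SM:
  assumes "x \<in> Kn3 n" shows "EE n d r j x = SM d (tri x) r j"
proof -
  have deg: "degree (tri x l) \<le> n" for l using assms unfolding Kn3_def tri_def by (cases x) auto
  show ?thesis
  proof (cases "j mod Suc d \<le> r \<and> r - j mod Suc d \<le> n")
    case True
    then show ?thesis unfolding EE_alt SM_def coeff_monom_mult by simp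
  next
    case False
    then show ?thesis unfolding EE_alt SM_def coeff_monom_mult
      using deg[of "j div Suc d"] by (auto simp: coeff_eq_0)
  qed
qed

lemma closed_hasSyz:
  "\<exists>F \<subseteq> polyfun n. \<forall>x \<in> Kn3 n. hasSyz d J (tri x) \<longleftrightarrow> (\<forall>f\<in>F. (f::'a::field triple \<Rightarrow> 'a) x = 0)"
proof -
  have "\<And>r j. r < n + d + 1 \<Longrightarrow> j < J * Suc d \<Longrightarrow> EE n d r j \<in> polyfun n" by (rule EE_polyfun)
  from closed_Dep[OF this] obtain F where FF: "F \<subseteq> polyfun n \<and>
     (\<forall>x. Dep (\<lambda>r j. EE n d r j x) (n + d + 1) (J * Suc d) \<longleftrightarrow> (\<forall>f\<in>F. (f::'a triple \<Rightarrow> 'a) x = 0))" ..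
  have F: "F \<subseteq> polyfun n" using FF by (rule conjunct1)
  have eq: "\<forall>x. Dep (\<lambda>r j. EE n d r j x) (n + d + 1) (J * Suc d) \<longleftrightarrow> (\<forall>f\<in>F. f x = 0)" using FF by (rule conjunct2)
  have "\<forall>x \<in> Kn3 n. hasSyz d J (tri x) \<longleftrightarrow> (\<forall>f\<in>F. f x = 0)"
  proof
    fix x :: "'a triple" assume x: "x \<in> Kn3 n"
    have deg: "\<And>l. degree (tri x l) \<le> n" using x unfolding Kn3_def tri_def by (cases x) auto
    have "hasSyz d J (tri x) \<longleftrightarrow> Dep (SM d (tri x)) (n + d + 1) (J * Suc d)"
      by (rule hasSyz_Dep) (rule deg)
    also have "SM d (tri x) = (\<lambda>r j. EE n d r j x)" using EE_SM[OF x] by (intro ext) simp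
    finally have h1: "hasSyz d J (tri x) \<longleftrightarrow> Dep (\<lambda>r j. EE n d r j x) (n + d + 1) (J * Suc d)" .
    show "hasSyz d J (tri x) \<longleftrightarrow> (\<forall>f\<in>F. f x = 0)" unfolding h1 by (rule spec[OF eq])
  qed
  then show ?thesis using F by (intro exI[of _ F] conjI)
qed

lemma sum3: "(\<Sum>l<3. f l) = f 0 + f 1 + f (2::nat)" for f :: "nat \<Rightarrow> 'b::comm_monoid_add"
  by (simp add: numeral_3_eq_3 numeral_2_eq_2 lessThan_Suc ac_simps)

lemma less3: "l < 3 \<Longrightarrow> l = 0 \<or> l = 1 \<or> l = (2::nat)" by auto

lemma tri_simps: "tri (a, b, c) 0 = a" "tri (a, b, c) 1 = b" "tri (a, b, c) 2 = c"
  unfolding tri_def by auto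

lemma hasSyz3:
  "hasSyz d 3 (tri (a, b, c)) \<longleftrightarrow> (\<exists>s \<in> Syz a b c - {(0, 0, 0)}. tdeg s \<le> d)"
proof
  assume "hasSyz d 3 (tri (a, b, c))"
  then obtain As where A1: "\<forall>l<3. degree (As l) \<le> d" and A2: "\<exists>l<3. As l \<noteq> 0"
    and A3: "(\<Sum>l<3. As l * tri (a, b, c) l) = 0" unfolding hasSyz_def by blast
  have "As 0 * a + As 1 * b + As 2 * c = 0"
    using A3 unfolding sum3 tri_simps .
  moreover have "(As 0, As 1, As 2) \<noteq> (0, 0, 0)"
    using A2 less3 by fastforce
  moreover have "tdeg (As 0, As 1, As 2) \<le> d" using A1 by (simp add: tdeg_def)
  ultimately show "\<exists>s \<in> Syz a b c - {(0, 0, 0)}. tdeg s \<le> d"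
    unfolding Syz_def by (intro bexI[of _ "(As 0, As 1, As 2)"]) auto
next
  assume "\<exists>s \<in> Syz a b c - {(0, 0, 0)}. tdeg s \<le> d"
  then obtain A B C where s: "A * a + B * b + C * c = 0" "(A, B, C) \<noteq> (0, 0, 0)"
    "tdeg (A, B, C) \<le> d" unfolding Syz_def by blast
  define As where "As l = (if l = 0 then A else if l = 1 then B else C)" for l :: nat
  have As: "As 0 = A" "As 1 = B" "As 2 = C" unfolding As_def by auto
  have "\<forall>l<3. degree (As l) \<le> d" using s(3) unfolding As_def tdeg_def by auto
  moreover have "\<exists>l<3. As l \<noteq> 0"
  proof -
    have "A \<noteq> 0 \<or> B \<noteq> 0 \<or> C \<noteq> 0" using s(2) by auto
    then have "As 0 \<noteq> 0 \<or> As 1 \<noteq> 0 \<or> As 2 \<noteq> 0" unfolding As .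
    then show ?thesis
    proof (elim disjE)
      assume "As 0 \<noteq> 0" then show ?thesis by (intro exI[of _ 0]) simp
    next
      assume "As 1 \<noteq> 0" then show ?thesis by (intro exI[of _ 1]) simp
    next
      assume "As 2 \<noteq> 0" then show ?thesis by (intro exI[of _ 2]) simp
    qed
  qed
  moreover have "(\<Sum>l<3. As l * tri (a, b, c) l) = 0"
    using s(1) unfolding sum3 tri_simps As .
  ultimately show "hasSyz d 3 (tri (a, b, c))" unfolding hasSyz_def by (intro exI[of _ As] conjI)
qed

lemma mu_le: "s \<in> Syz a b c \<Longrightarrow> s \<noteq> (0, 0, 0) \<Longrightarrow> mu a b c \<le> tdeg s"
  unfolding mu_def by (rule Least_le) blast

lemma mu_ex:
  assumes "c \<noteq> 0"
  shows "\<exists>s \<in> Syz a b c - {(0, 0, 0)}. tdeg s = mu a b c"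
proof -
  have "(c, 0, -a) \<in> Syz a b c - {(0, 0, 0)}" using assms unfolding Syz_def by (simp add: mult.commute)
  then have "\<exists>d. \<exists>s \<in> Syz a b c - {(0, 0, 0)}. tdeg s = d" by blast
  then show ?thesis unfolding mu_def by (rule LeastI_ex)
qed

lemma mu_le_iff:
  assumes "c \<noteq> 0"
  shows "mu a b c \<le> d \<longleftrightarrow> hasSyz d 3 (tri (a, b, c))"
proof -
  obtain s where s: "s \<in> Syz a b c - {(0, 0, 0)}" "tdeg s = mu a b c" using mu_ex[OF assms] by blast
  show ?thesis unfolding hasSyz3
  proof
    assume "mu a b c \<le> d" then show "\<exists>s \<in> Syz a b c - {(0, 0, 0)}. tdeg s \<le> d"
      using s by (intro bexI[of _ s]) auto
  next
    assume "\<exists>s \<in> Syz a b c - {(0, 0, 0)}. tdeg s \<le> d"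
    then obtain s' where "s' \<in> Syz a b c" "s' \<noteq> (0, 0, 0)" "tdeg s' \<le> d" by blast
    then show "mu a b c \<le> d" using mu_le[of s' a b c] by simp
  qed
qed

lemma Pn_Kn3: "Pn n \<subseteq> Kn3 n"
  unfolding Pn_def Kn3_def by auto

lemma partA:
  fixes m n :: nat
  shows "zariski_closure_in n (Pn n :: 'a::field triple set) (Pmu n m) \<subseteq> (\<Union>i \<in> {0..m}. Pmu n i)"
proof -
  from closed_hasSyz obtain F where FF: "F \<subseteq> polyfun n \<and>
     (\<forall>x \<in> Kn3 n. hasSyz m 3 (tri x) \<longleftrightarrow> (\<forall>f\<in>F. (f::'a triple \<Rightarrow> 'a) x = 0))" ..
  have F: "F \<subseteq> polyfun n" using FF by (rule conjunct1)
  have eq: "\<And>x. x \<in> Kn3 n \<Longrightarrow> hasSyz m 3 (tri x) \<longleftrightarrow> (\<forall>f\<in>F. f x = 0)"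
    using FF by blast
  define Z where "Z = {x \<in> Kn3 n. \<forall>f\<in>F. f x = 0}"
  have Zc: "zariski_closed n Z" unfolding zariski_closed_def Z_def by (rule exI[of _ F]) (use F in simp)
  have sub: "Pmu n m \<subseteq> Pn n \<inter> Z"
  proof
    fix x :: "'a triple" assume x: "x \<in> Pmu n m"
    obtain a b c where xe: "x = (a, b, c)" by (cases x) auto
    have xP: "x \<in> Pn n" and mu: "mu a b c = m" using x xe unfolding Pmu_def by auto
    have c: "c \<noteq> 0" using xP xe unfolding Pn_def by auto
    have xK: "x \<in> Kn3 n" using xP Pn_Kn3 by blast
    have "hasSyz m 3 (tri x)" using mu_le_iff[OF c, where a = a and b = b and d = m] mu xe by simp
    then have "\<forall>f\<in>F. f x = 0" using eq[OF xK] by simp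
    then show "x \<in> Pn n \<inter> Z" using xP xK unfolding Z_def by simp
  qed
  have "zariski_closure_in n (Pn n) (Pmu n m) \<subseteq> Pn n \<inter> Z"
    unfolding zariski_closure_in_def by (rule Inter_lower) (use Zc sub in auto)
  also have "Pn n \<inter> Z \<subseteq> (\<Union>i \<in> {0..m}. Pmu n i)"
  proof
    fix x :: "'a triple" assume x: "x \<in> Pn n \<inter> Z"
    obtain a b c where xe: "x = (a, b, c)" by (cases x) auto
    have c: "c \<noteq> 0" using x xe unfolding Pn_def by auto
    have xK: "x \<in> Kn3 n" and "\<forall>f\<in>F. f x = 0" using x unfolding Z_def by auto
    then have "hasSyz m 3 (tri x)" using eq[OF xK] by simp
    then have "mu a b c \<le> m" using mu_le_iff[OF c, where a = a and b = b and d = m] xe by simp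
    moreover have "x \<in> Pmu n (mu a b c)" using x xe unfolding Pmu_def by auto
    ultimately show "x \<in> (\<Union>i \<in> {0..m}. Pmu n i)" by auto
  qed
  finally show ?thesis .
qed

lemma alg_closed_infinite: "infinite (UNIV :: 'a::alg_closed_field set)"
proof
  assume fin: "finite (UNIV :: 'a set)"
  define q :: "'a poly" where "q = (\<Prod>a\<in>UNIV. [:-a, 1:])"
  define p :: "'a poly" where "p = q + 1"
  have dq: "degree q = card (UNIV :: 'a set)"
    unfolding q_def by (subst degree_prod_eq_sum_degree) auto
  have "card (UNIV :: 'a set) > 0" using fin by (simp add: card_gt_0_iff)
  then have dp: "degree p = card (UNIV :: 'a set)"
    unfolding p_def using dq by (subst degree_add_eq_left) auto
  then have "degree p > 0" using \<open>card (UNIV :: 'a set) > 0\<close> by simp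
  then obtain x where x: "poly p x = 0" using alg_closed_imp_poly_has_root by blast
  have "poly q x = (\<Prod>a\<in>UNIV. x - a)" unfolding q_def by (simp add: poly_prod)
  also have "\<dots> = 0" using fin by (intro prod_zero) auto
  finally show False using x unfolding p_def by simp
qed

definition pc :: "('a::comm_ring_1 \<Rightarrow> 'a poly) \<Rightarrow> bool" where
  "pc U \<longleftrightarrow> (\<forall>i. \<exists>P. \<forall>s. coeff (U s) i = poly P s)"

lemma pc_const: "pc (\<lambda>s. A)"
  unfolding pc_def
proof
  fix i show "\<exists>P. \<forall>s. coeff A i = poly P s" by (rule exI[of _ "[:coeff A i:]"]) simp
qed

lemma pc_lin: "pc (\<lambda>s. A + Polynomial.smult s B)"
  unfolding pc_def
proof
  fix i show "\<exists>P. \<forall>s. coeff (A + Polynomial.smult s B) i = poly P s"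
    by (rule exI[of _ "[:coeff A i, coeff B i:]"]) (simp add: mult.commute)
qed

lemma pc_X: "pc (\<lambda>s. [:s:] :: 'a::comm_ring_1 poly)"
  unfolding pc_def
proof
  fix i show "\<exists>P. \<forall>s. coeff [:s:] i = poly P (s::'a)"
    by (rule exI[of _ "if i = 0 then [:0, 1:] else 0"]) (simp add: coeff_pCons split: nat.split)
qed

lemma pc_choice:
  assumes "pc U" obtains PU where "\<And>i s. coeff (U s) i = poly (PU i) s"
  using assms unfolding pc_def by metis

lemma pc_add: "pc U \<Longrightarrow> pc V \<Longrightarrow> pc (\<lambda>s. U s + V s)"
  unfolding pc_def by (metis coeff_add poly_add)

lemma pc_minus: "pc U \<Longrightarrow> pc (\<lambda>s. - U s)"
  unfolding pc_def by (metis coeff_minus poly_minus)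

lemma pc_diff: "pc U \<Longrightarrow> pc V \<Longrightarrow> pc (\<lambda>s. U s - V s)"
  unfolding pc_def by (metis coeff_diff poly_diff)

lemma pc_mult:
  assumes "pc U" "pc V" shows "pc (\<lambda>s. U s * V s)"
proof -
  obtain PU where PU: "\<And>i s. coeff (U s) i = poly (PU i) s" using pc_choice[OF assms(1)] by blast
  obtain PV where PV: "\<And>i s. coeff (V s) i = poly (PV i) s" using pc_choice[OF assms(2)] by blast
  show ?thesis unfolding pc_def
  proof
    fix i
    show "\<exists>P. \<forall>s. coeff (U s * V s) i = poly P s"
      by (rule exI[of _ "\<Sum>j\<le>i. PU j * PV (i - j)"]) (simp add: coeff_mult poly_sum PU PV)
  qed
qed

definition pct :: "('a::comm_ring_1 \<Rightarrow> 'a triple) \<Rightarrow> bool" where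
  "pct Y \<longleftrightarrow> pc (\<lambda>s. fst (Y s)) \<and> pc (\<lambda>s. fst (snd (Y s))) \<and> pc (\<lambda>s. snd (snd (Y s)))"

lemma polyfun_curve:
  assumes "f \<in> polyfun n" "pct Y" shows "\<exists>P. \<forall>s. f (Y s) = poly P s"
  using assms(1)
proof induction
  case (const k)
  show ?case by (rule exI[of _ "[:k:]"]) simp
next
  case (coord_a i)
  then show ?case using assms(2) unfolding pct_def pc_def by (simp add: case_prod_beta)
next
  case (coord_b i)
  then show ?case using assms(2) unfolding pct_def pc_def by (simp add: case_prod_beta)
next
  case (coord_c i)
  then show ?case using assms(2) unfolding pct_def pc_def by (simp add: case_prod_beta)
next
  case (add f g)
  then show ?case by (metis poly_add)
next
  case (mult f g)
  then show ?case by (metis poly_mult)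
qed

lemma finite_zero_curve:
  fixes Y :: "'a::field \<Rightarrow> 'a triple"
  assumes "f \<in> polyfun n" "pct Y" "f (Y s0) \<noteq> 0"
  shows "finite {s. f (Y s) = 0}"
proof -
  obtain P where P: "\<And>s. f (Y s) = poly P s" using polyfun_curve[OF assms(1,2)] by blast
  have "P \<noteq> 0" using assms(3) P by auto
  then show ?thesis using poly_roots_finite[of P] by (simp add: P)
qed

lemma open_hasSyz:
  fixes Y :: "'a::field \<Rightarrow> 'a triple"
  assumes "pct Y" "\<And>s. Y s \<in> Kn3 n" "\<not> hasSyz d J (tri (Y s0))"
  shows "finite {s. hasSyz d J (tri (Y s))}"
proof -
  from closed_hasSyz obtain F where FF: "F \<subseteq> polyfun n \<and>
     (\<forall>x \<in> Kn3 n. hasSyz d J (tri x) \<longleftrightarrow> (\<forall>f\<in>F. (f::'a triple \<Rightarrow> 'a) x = 0))" ..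
  have F: "F \<subseteq> polyfun n" using FF by (rule conjunct1)
  have eq: "\<And>x. x \<in> Kn3 n \<Longrightarrow> hasSyz d J (tri x) \<longleftrightarrow> (\<forall>f\<in>F. f x = 0)"
    using FF by blast
  have "\<not> (\<forall>f\<in>F. f (Y s0) = 0)" using eq[OF assms(2)] assms(3) by simp
  then obtain f where f: "f \<in> F" "f (Y s0) \<noteq> 0" by blast
  have "{s. hasSyz d J (tri (Y s))} \<subseteq> {s. f (Y s) = 0}"
    using eq[OF assms(2)] f(1) by auto
  moreover have fp: "f \<in> polyfun n" using f(1) F by blast
  have "finite {s. f (Y s) = 0}"
    using finite_zero_curve[OF fp assms(1) f(2)] .
  ultimately show ?thesis by (rule finite_subset)
qed

lemma open_coeff:
  fixes U :: "'a::field \<Rightarrow> 'a poly"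
  assumes "pc U" "coeff (U s0) i \<noteq> 0"
  shows "finite {s. coeff (U s) i = 0}"
proof -
  obtain PU where PU: "\<And>i s. coeff (U s) i = poly (PU i) s" using pc_choice[OF assms(1)] by blast
  have "PU i \<noteq> 0" using assms(2) PU by auto
  then show ?thesis using poly_roots_finite[of "PU i"] by (simp add: PU)
qed

lemma vanish_curve:
  fixes Y :: "'a::alg_closed_field \<Rightarrow> 'a triple"
  assumes "f \<in> polyfun n" "pct Y" "finite {s. \<not> Q s}" "\<And>s. Q s \<Longrightarrow> f (Y s) = 0"
  shows "f (Y s1) = 0"
proof -
  obtain P where P: "\<And>s. f (Y s) = poly P s" using polyfun_curve[OF assms(1,2)] by blast
  have inf: "infinite {s. Q s}"
  proof
    assume "finite {s. Q s}"
    then have "finite ({s. Q s} \<union> {s. \<not> Q s})" using assms(3) by simp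
    moreover have "{s. Q s} \<union> {s. \<not> Q s} = UNIV" by auto
    ultimately show False using alg_closed_infinite[where 'a='a] by simp
  qed
  have "{s. Q s} \<subseteq> {s. poly P s = 0}" using assms(4) P by auto
  then have "infinite {s. poly P s = 0}" using inf finite_subset by blast
  then have "P = 0" using poly_roots_finite by blast
  then show ?thesis using P by simp
qed

definition cross :: "'a::comm_ring_1 triple \<Rightarrow> 'a triple \<Rightarrow> 'a triple" where
  "cross p q = (case p of (p1, p2, p3) \<Rightarrow> case q of (q1, q2, q3) \<Rightarrow>
     (p2 * q3 - p3 * q2, p3 * q1 - p1 * q3, p1 * q2 - p2 * q1))"

lemma cross_simp: "cross (p1, p2, p3) (q1, q2, q3) = (p2 * q3 - p3 * q2, p3 * q1 - p1 * q3, p1 * q2 - p2 * q1)"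
  unfolding cross_def by simp

lemma syz_cross: "p \<in> Syz (fst (cross p q)) (fst (snd (cross p q))) (snd (snd (cross p q)))"
proof -
  obtain p1 p2 p3 q1 q2 q3 where pq: "p = (p1, p2, p3)" "q = (q1, q2, q3)" by (cases p, cases q) auto
  have "p1 * (p2 * q3 - p3 * q2) + p2 * (p3 * q1 - p1 * q3) + p3 * (p1 * q2 - p2 * q1) = 0"
    by (simp add: algebra_simps)
  then show ?thesis by (simp add: Syz_def cross_simp pq)
qed

definition tlin :: "'a::comm_ring_1 triple \<Rightarrow> 'a triple \<Rightarrow> 'a \<Rightarrow> 'a triple" where
  "tlin p q s = (fst p + Polynomial.smult s (fst q - fst p),
                 fst (snd p) + Polynomial.smult s (fst (snd q) - fst (snd p)),
                 snd (snd p) + Polynomial.smult s (snd (snd q) - snd (snd p)))"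

lemma sum2: "(\<Sum>l<2. f l) = f 0 + f (1::nat)" for f :: "nat \<Rightarrow> 'b::comm_monoid_add"
  by (simp add: numeral_2_eq_2 lessThan_Suc ac_simps)

lemma less2: "l < 2 \<Longrightarrow> l = 0 \<or> l = (1::nat)" by auto

lemma noSyz_B8:
  fixes z :: "'a::field poly"
  assumes n: "n \<ge> 1"
  shows "\<not> hasSyz (n - 1) 2 (tri (monom 1 n, 1, z))"
proof
  assume "hasSyz (n - 1) 2 (tri (monom 1 n, 1, z))"
  then obtain As where A1: "\<forall>l<2. degree (As l) \<le> n - 1" and A2: "\<exists>l<2. As l \<noteq> (0::'a poly)"
    and A3: "(\<Sum>l<2. As l * tri (monom 1 n, 1, z) l) = 0" unfolding hasSyz_def by blast
  have eq: "As 0 * monom 1 n + As 1 = 0" using A3 unfolding sum2 tri_simps by simp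
  have "As 0 = 0"
  proof (rule ccontr)
    assume ne: "As 0 \<noteq> 0"
    have "As 1 = - (As 0 * monom 1 n)" using eq by (simp add: eq_neg_iff_add_eq_0 add.commute)
    then have "degree (As 1) = degree (As 0) + n" using ne by (simp add: degree_mult_eq degree_monom_eq)
    moreover have "degree (As 1) \<le> n - 1" using A1 by simp
    ultimately show False using n by simp
  qed
  moreover then have "As 1 = 0" using eq by simp
  ultimately show False using A2 less2 by blast
qed

lemma noSyz_B9:
  fixes n m :: nat
  assumes m: "m > 0" and mn: "2 * m \<le> n"
  shows "\<not> hasSyz (m - 1) 3 (tri (monom 1 n, 1, monom (1::'a::field) m))"
proof
  assume "hasSyz (m - 1) 3 (tri (monom 1 n, 1, monom (1::'a) m))"
  then obtain As where A1: "\<forall>l<3. degree (As l) \<le> m - 1" and A2: "\<exists>l<3. As l \<noteq> (0::'a poly)"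
    and A3: "(\<Sum>l<3. As l * tri (monom 1 n, 1, monom 1 m) l) = 0" unfolding hasSyz_def by blast
  have d0: "degree (As 0) \<le> m - 1" and d1: "degree (As 1) \<le> m - 1" and d2: "degree (As 2) \<le> m - 1"
    using A1 by auto
  have eq: "As 0 * monom 1 n + (As 1 + As 2 * monom 1 m) = 0" using A3 unfolding sum3 tri_simps
    by (simp add: add.assoc)
  have dR: "degree (As 1 + As 2 * monom 1 m) < n"
  proof -
    have "degree (As 2 * monom 1 m) \<le> degree (As 2) + m"
      using degree_mult_le[of "As 2" "monom 1 m"] by (simp add: degree_monom_eq)
    then have "degree (As 2 * monom 1 m) < n" using d2 m mn by linarith
    moreover have "degree (As 1) < n" using d1 m mn by linarith
    ultimately show ?thesis using degree_add_le_max[of "As 1" "As 2 * monom 1 m"] by linarith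
  qed
  have z0: "As 0 = 0"
  proof (rule ccontr)
    assume ne: "As 0 \<noteq> 0"
    have "As 0 * monom 1 n = - (As 1 + As 2 * monom 1 m)" using eq by (metis eq_neg_iff_add_eq_0)
    then have "degree (As 0) + n = degree (As 1 + As 2 * monom 1 m)"
      using ne by (metis degree_minus degree_mult_eq degree_monom_eq monom_eq_0_iff one_neq_zero)
    then show False using dR by simp
  qed
  have eq2: "As 1 + As 2 * monom 1 m = 0" using eq z0 by simp
  have z2: "As 2 = 0"
  proof (rule ccontr)
    assume ne: "As 2 \<noteq> 0"
    have "As 1 = - (As 2 * monom 1 m)" using eq2 by (simp add: eq_neg_iff_add_eq_0 add.commute)
    then have "degree (As 1) = degree (As 2) + m" using ne by (simp add: degree_mult_eq degree_monom_eq)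
    then show False using d1 m by simp
  qed
  have z1: "As 1 = 0" using eq2 z2 by simp
  show False using A2 less3 z0 z1 z2 by blast
qed

lemma coprime_of_noSyz:
  fixes a b c :: "'a::field poly"
  assumes n: "n \<ge> 1" and da: "degree a \<le> n" and db: "degree b \<le> n"
    and ns: "\<not> hasSyz (n - 1) 2 (tri (a, b, c))"
  shows "coprime3 a b c"
  unfolding coprime3_def
proof (intro allI impI)
  fix d assume d: "d dvd a \<and> d dvd b \<and> d dvd c"
  show "is_unit d"
  proof (rule ccontr)
    assume nu: "\<not> is_unit d"
    show False
    proof (cases "a = 0 \<and> b = 0")
      case True
      define As :: "nat \<Rightarrow> 'a poly" where "As l = (if l = 0 then 1 else 0)" for l
      have "hasSyz (n - 1) 2 (tri (a, b, c))" unfolding hasSyz_def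
      proof (intro exI[of _ As] conjI)
        show "\<forall>l<2. degree (As l) \<le> n - 1" unfolding As_def by auto
        show "\<exists>l<2. As l \<noteq> 0" by (rule exI[of _ 0]) (simp add: As_def)
        show "(\<Sum>l<2. As l * tri (a, b, c) l) = 0" unfolding sum2 tri_simps using True by simp
      qed
      with ns show False by blast
    next
      case False
      then have d0: "d \<noteq> 0" using d by auto
      then have dd: "degree d > 0" using nu is_unit_iff_degree by blast
      obtain a' where a': "a = d * a'" using d by blast
      obtain b' where b': "b = d * b'" using d by blast
      have da': "degree a' \<le> n - 1"
      proof (cases "a' = 0")
        case False
        then have "degree a = degree d + degree a'" using a' d0 by (simp add: degree_mult_eq)
        then show ?thesis using da dd by linarith
      qed simp
      have db': "degree b' \<le> n - 1"
      proof (cases "b' = 0")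
        case False
        then have "degree b = degree d + degree b'" using b' d0 by (simp add: degree_mult_eq)
        then show ?thesis using db dd by linarith
      qed simp
      define As :: "nat \<Rightarrow> 'a poly" where "As l = (if l = 0 then b' else - a')" for l
      have "hasSyz (n - 1) 2 (tri (a, b, c))" unfolding hasSyz_def
      proof (intro exI[of _ As] conjI)
        show "\<forall>l<2. degree (As l) \<le> n - 1" unfolding As_def using da' db' by auto
        have "a' \<noteq> 0 \<or> b' \<noteq> 0" using False a' b' by auto
        then show "\<exists>l<2. As l \<noteq> 0"
        proof
          assume "a' \<noteq> 0" then show ?thesis by (intro exI[of _ 1]) (simp add: As_def)
        next
          assume "b' \<noteq> 0" then show ?thesis by (intro exI[of _ 0]) (simp add: As_def)
        qed
        show "(\<Sum>l<2. As l * tri (a, b, c) l) = 0" unfolding sum2 tri_simps As_def a' b' by simp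
      qed
      with ns show False by blast
    qed
  qed
qed

lemma pct_tlin: "pct (tlin p q)"
  unfolding pct_def tlin_def by (simp add: pc_lin)

lemma pct_cross: "pct P \<Longrightarrow> pct Q \<Longrightarrow> pct (\<lambda>s. cross (P s) (Q s))"
  unfolding pct_def cross_def by (simp add: case_prod_beta pc_diff pc_mult)

lemma tdeg_le: "tdeg p \<le> m \<longleftrightarrow> degree (fst p) \<le> m \<and> degree (fst (snd p)) \<le> m \<and> degree (snd (snd p)) \<le> m"
  unfolding tdeg_def by (cases p) auto

lemma degree_lin_le: "degree (a::'a::comm_ring_1 poly) \<le> m \<Longrightarrow> degree b \<le> m \<Longrightarrow> degree (a + Polynomial.smult s (b - a)) \<le> m"
proof -
  assume a: "degree a \<le> m" and b: "degree b \<le> m"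
  have "degree (b - a) \<le> m" using degree_diff_le_max[of b a] a b by simp
  then have "degree (Polynomial.smult s (b - a)) \<le> m" using degree_smult_le order_trans by blast
  then show ?thesis using degree_add_le_max[of a "Polynomial.smult s (b - a)"] a by simp
qed

lemma tdeg_tlin: "tdeg p \<le> m \<Longrightarrow> tdeg q \<le> m \<Longrightarrow> tdeg (tlin p q s) \<le> m"
  unfolding tdeg_le tlin_def by (simp add: degree_lin_le)

lemma degree_cross_comp: "degree (a::'a::comm_ring_1 poly) \<le> m \<Longrightarrow> degree b \<le> k \<Longrightarrow> degree c \<le> m \<Longrightarrow> degree d \<le> k \<Longrightarrow>
   degree (a * b - c * d) \<le> m + k"
proof -
  assume a: "degree a \<le> m" and b: "degree b \<le> k" and c: "degree c \<le> m" and d: "degree d \<le> k"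
  have "degree (a * b) \<le> m + k" using degree_mult_le[of a b] a b by simp
  moreover have "degree (c * d) \<le> m + k" using degree_mult_le[of c d] c d by simp
  ultimately show ?thesis using degree_diff_le_max[of "a * b" "c * d"] by simp
qed

lemma cross_Kn3:
  assumes "tdeg p \<le> m" "tdeg q \<le> k" shows "cross p q \<in> Kn3 (m + k)"
proof -
  obtain p1 p2 p3 q1 q2 q3 where pq: "p = (p1, p2, p3)" "q = (q1, q2, q3)" by (cases p, cases q) auto
  show ?thesis using assms unfolding pq cross_simp Kn3_def tdeg_le
    by (auto intro!: degree_cross_comp)
qed

lemma tlin_0: "tlin p q 0 = p" unfolding tlin_def by simp
lemma tlin_1: "tlin p q 1 = q" unfolding tlin_def by simp

lemma step1:
  fixes f :: "'a::alg_closed_field triple \<Rightarrow> 'a"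
  assumes n1: "n \<ge> 1" and m2: "2 * m \<le> n" and fp: "f \<in> polyfun n"
    and van: "\<And>x. x \<in> Pmu n m \<Longrightarrow> f x = 0"
    and dp: "tdeg p' \<le> m" and dq: "tdeg q' \<le> n - m"
  shows "f (cross p' q') = 0"
proof -
  define p0 :: "'a triple" where "p0 = (0, monom 1 m, -1)"
  define q0 :: "'a triple" where "q0 = (-1, 0, monom 1 (n - m))"
  define P where "P = tlin p0 p'"
  define Q where "Q = tlin q0 q'"
  define Y where "Y s = cross (P s) (Q s)" for s
  have pctY: "pct Y" unfolding Y_def P_def Q_def by (intro pct_cross pct_tlin)
  have dp0: "tdeg p0 \<le> m" unfolding p0_def tdeg_def by (simp add: degree_monom_le)
  have dq0: "tdeg q0 \<le> n - m" unfolding q0_def tdeg_def by (simp add: degree_monom_le)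
  have dP: "tdeg (P s) \<le> m" for s unfolding P_def using tdeg_tlin dp0 dp by blast
  have dQ: "tdeg (Q s) \<le> n - m" for s unfolding Q_def using tdeg_tlin dq0 dq by blast
  have YK: "Y s \<in> Kn3 n" for s
    using cross_Kn3[OF dP dQ] m2 unfolding Y_def by simp
  have Y0: "Y 0 = (monom 1 n, 1, monom 1 m)"
    unfolding Y_def P_def Q_def tlin_0 p0_def q0_def cross_simp using m2
    by (simp add: mult_monom)
  have Y1: "Y 1 = cross p' q'" unfolding Y_def P_def Q_def tlin_1 ..
  have pc1: "pc (\<lambda>s. fst (Y s))" and pc3: "pc (\<lambda>s. snd (snd (Y s)))"
    using pctY unfolding pct_def by auto
  have pcP3: "pc (\<lambda>s. snd (snd (P s)))" using pct_tlin unfolding P_def pct_def by blast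
  define E1 where "E1 = {s. coeff (fst (Y s)) n = 0}"
  define E2 where "E2 = {s. coeff (snd (snd (Y s))) m = 0}"
  define E3 where "E3 = {s. hasSyz (n - 1) 2 (tri (Y s))}"
  define E4 where "E4 = {s. 0 < m \<and> hasSyz (m - 1) 3 (tri (Y s))}"
  define E5 where "E5 = {s. coeff (snd (snd (P s))) 0 = 0}"
  have fE1: "finite E1" unfolding E1_def by (rule open_coeff[OF pc1, of 0]) (simp add: Y0)
  have fE2: "finite E2" unfolding E2_def by (rule open_coeff[OF pc3, of 0]) (simp add: Y0)
  have fE3: "finite E3" unfolding E3_def
    by (rule open_hasSyz[OF pctY YK, of _ _ 0]) (simp only: Y0, rule noSyz_B8[OF n1])
  have fE4: "finite E4"
  proof (cases "m = 0")
    case True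
    then show ?thesis unfolding E4_def by simp
  next
    case False
    then have "finite {s. hasSyz (m - 1) 3 (tri (Y s))}"
      by (intro open_hasSyz[OF pctY YK, of _ _ 0]) (simp only: Y0, rule noSyz_B9, use False m2 in auto)
    then show ?thesis unfolding E4_def by (rule finite_subset[rotated]) auto
  qed
  have fE5: "finite E5" unfolding E5_def
    by (rule open_coeff[OF pcP3, of 0]) (simp add: P_def tlin_0 p0_def)
  have good: "Y s \<in> Pmu n m" if s: "s \<notin> E1 \<union> E2 \<union> E3 \<union> E4 \<union> E5" for s
  proof -
    obtain a b c where abc: "Y s = (a, b, c)" by (cases "Y s") auto
    have ca: "coeff a n \<noteq> 0" using s abc unfolding E1_def by auto
    have cc: "coeff c m \<noteq> 0" using s abc unfolding E2_def by auto
    have ns2: "\<not> hasSyz (n - 1) 2 (tri (a, b, c))" using s abc unfolding E3_def by auto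
    have ns3: "0 < m \<Longrightarrow> \<not> hasSyz (m - 1) 3 (tri (a, b, c))" using s abc unfolding E4_def by auto
    have cP: "snd (snd (P s)) \<noteq> 0" using s unfolding E5_def by auto
    have deg: "degree a \<le> n" "degree b \<le> n" "degree c \<le> n" using YK[of s] abc unfolding Kn3_def by auto
    have c0: "c \<noteq> 0" using cc by auto
    have da: "degree a = n" using ca deg(1) le_degree by (metis le_antisym)
    have maxd: "max (degree a) (max (degree b) (degree c)) = n" using da deg by simp
    have cop: "coprime3 a b c" using coprime_of_noSyz[OF n1 deg(1) deg(2) ns2] .
    have PS: "P s \<in> Syz a b c" using syz_cross[of "P s" "Q s"] abc unfolding Y_def by simp
    have P0: "P s \<noteq> (0, 0, 0)" using cP by auto
    have mu1: "mu a b c \<le> m" using mu_le[OF PS P0] dP[of s] by simp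
    have mu2: "mu a b c \<ge> m"
    proof (cases "m = 0")
      case False
      then have "\<not> hasSyz (m - 1) 3 (tri (a, b, c))" using ns3 by simp
      then have "\<not> mu a b c \<le> m - 1" using mu_le_iff[OF c0, where a = a and b = b and d = "m - 1"] by simp
      then show ?thesis by simp
    qed simp
    show ?thesis unfolding abc Pmu_def Pn_def using c0 cop maxd mu1 mu2 by simp
  qed
  have "finite {s. \<not> (s \<notin> E1 \<union> E2 \<union> E3 \<union> E4 \<union> E5)}"
    using fE1 fE2 fE3 fE4 fE5 by simp
  then have "f (Y 1) = 0"
    by (rule vanish_curve[OF fp pctY]) (use good van in blast)
  then show ?thesis unfolding Y1 .
qed

lemma coeff_mult_bound:
  fixes f g :: "'a::comm_ring_1 poly"
  assumes "degree f \<le> i" "degree g \<le> D"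
  shows "coeff (f * g) (i + D) = coeff f i * coeff g D"
proof -
  have "coeff (f * g) (i + D) = (\<Sum>j\<le>i + D. coeff f j * coeff g (i + D - j))" by (rule coeff_mult)
  also have "\<dots> = (\<Sum>j\<le>i + D. if j = i then coeff f i * coeff g D else 0)"
  proof (intro sum.cong refl)
    fix j assume "j \<in> {..i + D}"
    show "coeff f j * coeff g (i + D - j) = (if j = i then coeff f i * coeff g D else 0)"
    proof (cases "j = i")
      case False
      show ?thesis
      proof (cases "j < i")
        case True
        then have "coeff g (i + D - j) = 0" using assms(2) by (intro coeff_eq_0) linarith
        then show ?thesis using False by simp
      next
        case False
        then have "coeff f j = 0" using assms(1) \<open>j \<noteq> i\<close> by (intro coeff_eq_0) linarith
        then show ?thesis using \<open>j \<noteq> i\<close> by simp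
      qed
    qed simp
  qed
  also have "\<dots> = coeff f i * coeff g D" by simp
  finally show ?thesis .
qed

lemma degree_lt_of_coeff:
  fixes f :: "'a::zero poly"
  assumes "degree f \<le> D" "coeff f D = 0" "0 < D" shows "degree f < D"
proof (cases "f = 0")
  case False
  then have "coeff f (degree f) \<noteq> 0" by simp
  then have "degree f \<noteq> D" using assms(2) by auto
  then show ?thesis using assms(1) by simp
qed (use assms in simp)

lemma scal_cross:
  fixes a1 a2 a3 b1 b2 b3 :: "'a::field"
  assumes "a2 * b3 - a3 * b2 = 0" "a3 * b1 - a1 * b3 = 0" "a1 * b2 - a2 * b1 = 0"
    "a1 \<noteq> 0 \<or> a2 \<noteq> 0 \<or> a3 \<noteq> 0"
  shows "\<exists>l. b1 = l * a1 \<and> b2 = l * a2 \<and> b3 = l * a3"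
  using assms(4)
proof (elim disjE)
  assume a: "a1 \<noteq> 0"
  show ?thesis
    by (rule exI[of _ "b1 / a1"]) (use a assms(1-3) in \<open>auto simp: field_simps algebra_simps\<close>)
next
  assume a: "a2 \<noteq> 0"
  show ?thesis
    by (rule exI[of _ "b2 / a2"]) (use a assms(1-3) in \<open>auto simp: field_simps algebra_simps\<close>)
next
  assume a: "a3 \<noteq> 0"
  show ?thesis
    by (rule exI[of _ "b3 / a3"]) (use a assms(1-3) in \<open>auto simp: field_simps algebra_simps\<close>)
qed

lemma lead_nonzero:
  fixes p1 p2 p3 :: "'a::zero poly"
  assumes "(p1, p2, p3) \<noteq> (0, 0, 0)" "tdeg (p1, p2, p3) = i"
  shows "coeff p1 i \<noteq> 0 \<or> coeff p2 i \<noteq> 0 \<or> coeff p3 i \<noteq> 0"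
proof -
  have i: "i = max (degree p1) (max (degree p2) (degree p3))" using assms(2) unfolding tdeg_def by simp
  have "\<exists>u \<in> {p1, p2, p3}. u \<noteq> 0 \<and> degree u = i"
  proof (cases "i = 0")
    case True
    then show ?thesis using assms(1) i by auto
  next
    case False
    then show ?thesis using i by (auto simp: max_def split: if_splits)
  qed
  then show ?thesis by auto
qed

lemma reduce:
  fixes p :: "'a::field triple"
  assumes p0: "p \<noteq> (0, 0, 0)" and tp: "tdeg p = i" and xK: "x \<in> Kn3 n" and iN: "i \<le> n - i"
  shows "cross p q = x \<Longrightarrow> \<exists>q'. cross p q' = x \<and> tdeg q' \<le> n - i"
proof (induction "tdeg q" arbitrary: q rule: less_induct)
  case less
  show ?case
  proof (cases "tdeg q \<le> n - i")
    case True
    then show ?thesis using less.prems by blast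
  next
    case False
    define D where "D = tdeg q"
    have DI: "D > n - i" "i \<le> D" using False iN unfolding D_def by auto
    obtain p1 p2 p3 where pe: "p = (p1, p2, p3)" by (cases p) auto
    obtain q1 q2 q3 where qe: "q = (q1, q2, q3)" by (cases q) auto
    obtain x1 x2 x3 where xe: "x = (x1, x2, x3)" by (cases x) auto
    have dp: "degree p1 \<le> i" "degree p2 \<le> i" "degree p3 \<le> i" using tp pe unfolding tdeg_def by auto
    have dq: "degree q1 \<le> D" "degree q2 \<le> D" "degree q3 \<le> D" using qe unfolding D_def tdeg_def by auto
    have dx: "degree x1 \<le> n" "degree x2 \<le> n" "degree x3 \<le> n" using xK xe unfolding Kn3_def by auto
    have cr: "x1 = p2 * q3 - p3 * q2" "x2 = p3 * q1 - p1 * q3" "x3 = p1 * q2 - p2 * q1"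
      using less.prems pe qe xe by (simp_all add: cross_simp)
    have big: "n < i + D" using DI by linarith
    have e1: "coeff p2 i * coeff q3 D - coeff p3 i * coeff q2 D = 0"
    proof -
      have "coeff x1 (i + D) = 0" using dx big by (intro coeff_eq_0) linarith
      then show ?thesis using cr by (simp add: coeff_mult_bound dp dq)
    qed
    have e2: "coeff p3 i * coeff q1 D - coeff p1 i * coeff q3 D = 0"
    proof -
      have "coeff x2 (i + D) = 0" using dx big by (intro coeff_eq_0) linarith
      then show ?thesis using cr by (simp add: coeff_mult_bound dp dq)
    qed
    have e3: "coeff p1 i * coeff q2 D - coeff p2 i * coeff q1 D = 0"
    proof -
      have "coeff x3 (i + D) = 0" using dx big by (intro coeff_eq_0) linarith
      then show ?thesis using cr by (simp add: coeff_mult_bound dp dq)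
    qed
    have ln: "coeff p1 i \<noteq> 0 \<or> coeff p2 i \<noteq> 0 \<or> coeff p3 i \<noteq> 0"
      using lead_nonzero[of p1 p2 p3 i] p0 tp pe by simp
    obtain l where l: "coeff q1 D = l * coeff p1 i" "coeff q2 D = l * coeff p2 i" "coeff q3 D = l * coeff p3 i"
      using scal_cross[OF e1 e2 e3 ln] by blast
    define T where "T = monom l (D - i)"
    define q' where "q' = (q1 - T * p1, q2 - T * p2, q3 - T * p3)"
    have cq': "cross p q' = x"
    proof -
      have "p2 * (q3 - T * p3) - p3 * (q2 - T * p2) = p2 * q3 - p3 * q2"
        "p3 * (q1 - T * p1) - p1 * (q3 - T * p3) = p3 * q1 - p1 * q3"
        "p1 * (q2 - T * p2) - p2 * (q1 - T * p1) = p1 * q2 - p2 * q1"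
        by (simp_all add: algebra_simps)
      then show ?thesis using cr unfolding pe q'_def xe cross_simp by simp
    qed
    have comp: "degree (u - T * v) < D" if du: "degree u \<le> D" and dv: "degree v \<le> i"
      and cu: "coeff u D = l * coeff v i" for u v :: "'a poly"
    proof -
      have dT: "degree (T * v) \<le> D"
      proof -
        have "degree (T * v) \<le> degree T + degree v" by (rule degree_mult_le)
        also have "\<dots> \<le> (D - i) + i" unfolding T_def using dv degree_monom_le[of l "D - i"] by linarith
        finally show ?thesis using DI by simp
      qed
      have "degree (u - T * v) \<le> D" using degree_diff_le_max[of u "T * v"] du dT by simp
      moreover have "coeff (u - T * v) D = 0"
        unfolding T_def using cu DI by (simp add: coeff_monom_mult)
      moreover have "0 < D" using DI by linarith
      ultimately show ?thesis by (rule degree_lt_of_coeff)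
    qed
    have "tdeg q' < D"
      unfolding q'_def tdeg_def using comp[OF dq(1) dp(1) l(1)] comp[OF dq(2) dp(2) l(2)] comp[OF dq(3) dp(3) l(3)]
      by simp
    then show ?thesis using less.hyps[of q'] cq' unfolding D_def by blast
  qed
qed

definition dot :: "'a::comm_ring_1 triple \<Rightarrow> 'a triple \<Rightarrow> 'a poly" where
  "dot p q = fst p * fst q + fst (snd p) * fst (snd q) + snd (snd p) * snd (snd q)"

lemma bac_cab:
  fixes p x e :: "'a::comm_ring_1 triple"
  assumes "dot p e = 1" "dot p x = 0"
  shows "cross p (cross x e) = x"
proof -
  obtain p1 p2 p3 where pe: "p = (p1, p2, p3)" by (cases p) auto
  obtain x1 x2 x3 where xe: "x = (x1, x2, x3)" by (cases x) auto
  obtain e1 e2 e3 where ee: "e = (e1, e2, e3)" by (cases e) auto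
  have D: "p1 * e1 + p2 * e2 + p3 * e3 = 1" and S: "p1 * x1 + p2 * x2 + p3 * x3 = 0"
    using assms pe xe ee unfolding dot_def by simp_all
  have "p2 * (x1 * e2 - x2 * e1) - p3 * (x3 * e1 - x1 * e3) = x1 * (p1 * e1 + p2 * e2 + p3 * e3) - e1 * (p1 * x1 + p2 * x2 + p3 * x3)"
    "p3 * (x2 * e3 - x3 * e2) - p1 * (x1 * e2 - x2 * e1) = x2 * (p1 * e1 + p2 * e2 + p3 * e3) - e2 * (p1 * x1 + p2 * x2 + p3 * x3)"
    "p1 * (x3 * e1 - x1 * e3) - p2 * (x2 * e3 - x3 * e2) = x3 * (p1 * e1 + p2 * e2 + p3 * e3) - e3 * (p1 * x1 + p2 * x2 + p3 * x3)"
    by (simp_all add: algebra_simps)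
  then show ?thesis unfolding pe xe ee cross_simp D S by simp
qed

lemma ideal_min:
  fixes p1 p2 p3 :: "'a::field poly"
  assumes p0: "(p1, p2, p3) \<noteq> (0, 0, 0)"
  shows "\<exists>g al be ga. g = al * p1 + be * p2 + ga * p3 \<and> g \<noteq> 0 \<and> g dvd p1 \<and> g dvd p2 \<and> g dvd p3"
proof -
  define P where "P d \<longleftrightarrow> (\<exists>al be ga. al * p1 + be * p2 + ga * p3 \<noteq> 0 \<and> degree (al * p1 + be * p2 + ga * p3) = d)" for d
  have "\<exists>d. P d"
  proof -
    have "p1 \<noteq> 0 \<or> p2 \<noteq> 0 \<or> p3 \<noteq> 0" using p0 by auto
    then show ?thesis
    proof (elim disjE)
      assume "p1 \<noteq> 0" then have "P (degree p1)" unfolding P_def by (intro exI[of _ 1] exI[of _ 0]) simp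
      then show ?thesis ..
    next
      assume "p2 \<noteq> 0" then have "P (degree p2)" unfolding P_def by (intro exI[of _ 0] exI[of _ 1]) simp
      then show ?thesis ..
    next
      assume "p3 \<noteq> 0" then have "P (degree p3)" unfolding P_def
        by (intro exI[of _ 0] exI[of _ 0] exI[of _ 1]) simp
      then show ?thesis ..
    qed
  qed
  then have "P (LEAST d. P d)" by (rule LeastI_ex)
  then obtain al be ga where g: "al * p1 + be * p2 + ga * p3 \<noteq> 0"
    and dg: "degree (al * p1 + be * p2 + ga * p3) = (LEAST d. P d)" unfolding P_def by blast
  define g where "g = al * p1 + be * p2 + ga * p3"
  have mn: "degree g \<le> degree (a1 * p1 + a2 * p2 + a3 * p3)" if "a1 * p1 + a2 * p2 + a3 * p3 \<noteq> 0" for a1 a2 a3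
  proof -
    have "P (degree (a1 * p1 + a2 * p2 + a3 * p3))" unfolding P_def using that by blast
    then show ?thesis using dg unfolding g_def by (simp add: Least_le)
  qed
  have dv: "g dvd u" if u: "u = a1 * p1 + a2 * p2 + a3 * p3" for u a1 a2 a3
  proof -
    define Q where "Q = u div g"
    have R: "u mod g = (a1 - Q * al) * p1 + (a2 - Q * be) * p2 + (a3 - Q * ga) * p3"
    proof -
      have "u mod g = u - Q * g" unfolding Q_def by (simp add: minus_div_mult_eq_mod[symmetric] mult.commute)
      then show ?thesis unfolding u g_def by (simp add: algebra_simps)
    qed
    have "u mod g = 0"
    proof (rule ccontr)
      assume ne: "u mod g \<noteq> 0"
      then have "degree (u mod g) < degree g" using g unfolding g_def by (intro degree_mod_less') auto
      moreover have "degree g \<le> degree (u mod g)" using mn[of "a1 - Q * al" "a2 - Q * be" "a3 - Q * ga"] ne R by simp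
      ultimately show False by simp
    qed
    then show ?thesis by (simp add: mod_0_imp_dvd)
  qed
  have "g dvd p1" by (rule dv[of p1 1 0 0]) simp
  moreover have "g dvd p2" by (rule dv[of p2 0 1 0]) simp
  moreover have "g dvd p3" by (rule dv[of p3 0 0 1]) simp
  ultimately show ?thesis using g unfolding g_def by blast
qed

lemma mubasis:
  fixes a b c :: "'a::field poly"
  assumes xP: "(a, b, c) \<in> Pn n" and mu: "mu a b c = i" and iN: "i \<le> n - i"
  shows "\<exists>p q. cross p q = (a, b, c) \<and> tdeg p = i \<and> p \<noteq> (0, 0, 0) \<and> tdeg q \<le> n - i"
proof -
  have c0: "c \<noteq> 0" using xP unfolding Pn_def by simp
  have xK: "(a, b, c) \<in> Kn3 n" using xP Pn_Kn3 by blast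
  obtain p where p: "p \<in> Syz a b c" "p \<noteq> (0, 0, 0)" "tdeg p = i" using mu_ex[OF c0, of a b] mu by auto
  obtain p1 p2 p3 where pe: "p = (p1, p2, p3)" by (cases p) auto
  have pS: "p1 * a + p2 * b + p3 * c = 0" using p(1) pe unfolding Syz_def by simp
  obtain g al be ga where gg: "g = al * p1 + be * p2 + ga * p3" and g0: "g \<noteq> 0"
    and gd: "g dvd p1" "g dvd p2" "g dvd p3"
    using ideal_min[of p1 p2 p3] p(2) pe by blast
  obtain r1 where r1: "p1 = g * r1" using gd(1) by (elim dvdE)
  obtain r2 where r2: "p2 = g * r2" using gd(2) by (elim dvdE)
  obtain r3 where r3: "p3 = g * r3" using gd(3) by (elim dvdE)
  have dp: "degree p1 \<le> i" "degree p2 \<le> i" "degree p3 \<le> i" using p(3) pe unfolding tdeg_def by auto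
  have dg: "degree g = 0"
  proof (rule ccontr)
    assume dg0: "degree g \<noteq> 0"
    have "g * (r1 * a + r2 * b + r3 * c) = 0" using pS r1 r2 r3 by (simp add: algebra_simps)
    then have rS: "(r1, r2, r3) \<in> Syz a b c" using g0 unfolding Syz_def by simp
    have r0: "(r1, r2, r3) \<noteq> (0, 0, 0)" using p(2) pe r1 r2 r3 by auto
    have ipos: "0 < i"
    proof -
      have "p1 \<noteq> 0 \<or> p2 \<noteq> 0 \<or> p3 \<noteq> 0" using p(2) pe by auto
      then show ?thesis using dp dg0 r1 r2 r3 g0 by (auto simp: degree_mult_eq)
    qed
    have dr: "degree r \<le> i - 1" if "degree (g * r) \<le> i" for r
    proof (cases "r = 0")
      case False
      then have "degree (g * r) = degree g + degree r" using g0 by (simp add: degree_mult_eq)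
      then show ?thesis using that dg0 by linarith
    qed simp
    have "tdeg (r1, r2, r3) \<le> i - 1" unfolding tdeg_def using dr dp r1 r2 r3 by simp
    moreover have "i \<le> tdeg (r1, r2, r3)" using mu_le[OF rS r0] mu by simp
    ultimately show False using ipos by linarith
  qed
  have "is_unit g" using g0 dg is_unit_iff_degree by blast
  then obtain h where h: "1 = g * h" by (elim dvdE)
  define e where "e = (h * al, h * be, h * ga)"
  have "dot p e = h * (al * p1 + be * p2 + ga * p3)"
    unfolding dot_def e_def pe by (simp add: algebra_simps)
  also have "\<dots> = 1" using h gg by (simp add: mult.commute)
  finally have de: "dot p e = 1" .
  have dx: "dot p (a, b, c) = 0" using pS pe unfolding dot_def by simp
  have cq0: "cross p (cross (a, b, c) e) = (a, b, c)" by (rule bac_cab[OF de dx])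
  obtain q where "cross p q = (a, b, c)" "tdeg q \<le> n - i"
    using reduce[OF p(2) p(3) xK iN cq0] by blast
  then show ?thesis using p(2,3) by blast
qed

lemma deg_div_mod:
  fixes u :: "'a::field poly"
  assumes du: "degree u \<le> N" and eN: "e \<le> N"
  shows "degree (u mod monom 1 e) \<le> e" "u mod monom 1 e = 0 \<or> degree (u mod monom 1 e) < e"
    "degree (u div monom 1 e) \<le> N - e"
    "u = monom 1 e * (u div monom 1 e) + u mod monom 1 e"
proof -
  have m0: "monom (1::'a) e \<noteq> 0" by simp
  show r: "u mod monom 1 e = 0 \<or> degree (u mod monom 1 e) < e"
    using degree_mod_less[OF m0, of u] by (simp add: degree_monom_eq)
  then show "degree (u mod monom 1 e) \<le> e" by auto
  show eq: "u = monom 1 e * (u div monom 1 e) + u mod monom 1 e"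
    by (simp add: mult.commute)
  show "degree (u div monom 1 e) \<le> N - e"
  proof (cases "u div monom 1 e = 0")
    case False
    have d1: "degree (monom 1 e * (u div monom 1 e)) = e + degree (u div monom 1 e)"
      using False by (simp add: degree_mult_eq degree_monom_eq)
    have "degree u = e + degree (u div monom 1 e)"
    proof (cases "u mod monom 1 e = 0")
      case True
      then show ?thesis using d1 eq by (metis add.right_neutral)
    next
      case False
      then have "degree (u mod monom 1 e) < degree (monom 1 e * (u div monom 1 e))" using r d1 by linarith
      then have "degree (monom 1 e * (u div monom 1 e) + u mod monom 1 e) = degree (monom 1 e * (u div monom 1 e))"
        by (rule degree_add_eq_left)
      then show ?thesis using eq d1 by metis
    qed
    then show ?thesis using du by linarith
  qed simp
qed

lemma stepB:
  fixes f :: "'a::alg_closed_field triple \<Rightarrow> 'a"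
  assumes n1: "n \<ge> 1" and m2: "2 * m \<le> n" and fp: "f \<in> polyfun n"
    and van: "\<And>x. x \<in> Pmu n m \<Longrightarrow> f x = 0"
    and xP: "x \<in> Pmu n i" and im: "i \<le> m"
  shows "f x = 0"
proof -
  obtain a b c where xe: "x = (a, b, c)" by (cases x) auto
  have xPn: "(a, b, c) \<in> Pn n" and mu: "mu a b c = i" using xP xe unfolding Pmu_def by auto
  have iN: "i \<le> n - i" using m2 im by linarith
  obtain p q where pq: "cross p q = (a, b, c)" and tp: "tdeg p = i" and tq: "tdeg q \<le> n - i"
    using mubasis[OF xPn mu iN] by blast
  obtain p1 p2 p3 where pe: "p = (p1, p2, p3)" by (cases p) auto
  obtain q1 q2 q3 where qe: "q = (q1, q2, q3)" by (cases q) auto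
  have dp: "degree p1 \<le> i" "degree p2 \<le> i" "degree p3 \<le> i" using tp pe unfolding tdeg_def by auto
  have dq: "degree q1 \<le> n - i" "degree q2 \<le> n - i" "degree q3 \<le> n - i" using tq qe unfolding tdeg_def by auto
  define e where "e = m - i"
  have eN: "e \<le> n - i" unfolding e_def using m2 im by linarith
  define T :: "'a poly" where "T = monom 1 e"
  define w1 where "w1 = q1 div T"
  define w2 where "w2 = q2 div T"
  define w3 where "w3 = q3 div T"
  define r1 where "r1 = q1 mod T"
  define r2 where "r2 = q2 mod T"
  define r3 where "r3 = q3 mod T"
  note D1 = deg_div_mod[OF dq(1) eN, folded T_def w1_def r1_def]
  note D2 = deg_div_mod[OF dq(2) eN, folded T_def w2_def r2_def]
  note D3 = deg_div_mod[OF dq(3) eN, folded T_def w3_def r3_def]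
  have nme: "n - i - e = n - m" unfolding e_def using m2 im by linarith
  define X where "X = tlin (a, b, c) (a + (r2 * w3 - r3 * w2), b + (r3 * w1 - r1 * w3), c + (r1 * w2 - r2 * w1))"
  have pctX: "pct X" unfolding X_def by (rule pct_tlin)
  have X0: "X 0 = x" unfolding X_def tlin_0 xe ..
  have Xs: "f (X s) = 0" if s0: "s \<noteq> 0" for s
  proof -
    define S :: "'a poly" where "S = [:s:]"
    define K :: "'a poly" where "K = [:inverse s:]"
    have KS: "K * S = 1" unfolding K_def S_def using s0 by simp
    have sm: "\<And>u. Polynomial.smult s u = S * u" unfolding S_def by simp
    define Ps where "Ps = (K * (T * p1 + S * r1), K * (T * p2 + S * r2), K * (T * p3 + S * r3))"
    define Qs where "Qs = (- p1 + S * w1, - p2 + S * w2, - p3 + S * w3)"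
    have cr: "a = p2 * q3 - p3 * q2" "b = p3 * q1 - p1 * q3" "c = p1 * q2 - p2 * q1"
      using pq pe qe by (simp_all add: cross_simp)
    have qd: "q1 = T * w1 + r1" "q2 = T * w2 + r2" "q3 = T * w3 + r3" using D1(4) D2(4) D3(4) by auto
    have id1: "(T * p2 + S * r2) * (- p3 + S * w3) - (T * p3 + S * r3) * (- p2 + S * w2) =
       S * ((p2 * (T * w3 + r3) - p3 * (T * w2 + r2)) + S * (r2 * w3 - r3 * w2))"
      by (simp add: algebra_simps)
    have id2: "(T * p3 + S * r3) * (- p1 + S * w1) - (T * p1 + S * r1) * (- p3 + S * w3) =
       S * ((p3 * (T * w1 + r1) - p1 * (T * w3 + r3)) + S * (r3 * w1 - r1 * w3))"
      by (simp add: algebra_simps)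
    have id3: "(T * p1 + S * r1) * (- p2 + S * w2) - (T * p2 + S * r2) * (- p1 + S * w1) =
       S * ((p1 * (T * w2 + r2) - p2 * (T * w1 + r1)) + S * (r1 * w2 - r2 * w1))"
      by (simp add: algebra_simps)
    have kk: "K * (A * B) - K * (C * D) = K * (A * B - C * D)" for A B C D :: "'a poly"
      by (simp add: algebra_simps)
    have kS: "K * (S * Z) = Z" for Z by (simp add: mult.assoc[symmetric] KS)
    have XC: "X s = cross Ps Qs"
      unfolding X_def tlin_def Ps_def Qs_def cross_simp sm
      by (simp only: fst_conv snd_conv mult.assoc kk id1 id2 id3 kS qd[symmetric] cr[symmetric]
           add_diff_cancel_left')
    have dPs: "tdeg Ps \<le> m"
    proof -
      have dl: "degree (K * (T * u + S * r)) \<le> m" if du: "degree u \<le> i" and dr: "degree r \<le> e" for u r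
      proof -
        have "degree (T * u) \<le> m"
        proof -
          have mi: "m - i + i = m" using im by simp
          show ?thesis
            using degree_mult_le[of T u] du unfolding T_def e_def using mi degree_monom_le[of "1::'a" "m - i"] by linarith
        qed
        moreover have "degree (S * r) \<le> m"
          using degree_mult_le[of S r] dr unfolding S_def e_def by simp
        ultimately have "degree (T * u + S * r) \<le> m" using degree_add_le_max[of "T * u" "S * r"] by simp
        then show ?thesis using degree_mult_le[of K "T * u + S * r"] unfolding K_def by simp
      qed
      show ?thesis unfolding Ps_def tdeg_def using dl dp D1(1) D2(1) D3(1) by simp
    qed
    have dQs: "tdeg Qs \<le> n - m"
    proof -
      have dl: "degree (- u + S * w) \<le> n - m" if du: "degree u \<le> i" and dw: "degree w \<le> n - m" for u w
      proof -
        have "degree (- u) \<le> n - m" using du m2 im by simp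
        moreover have "degree (S * w) \<le> n - m"
          using degree_mult_le[of S w] dw unfolding S_def by simp
        ultimately show ?thesis using degree_add_le_max[of "- u" "S * w"] by simp
      qed
      show ?thesis unfolding Qs_def tdeg_def using dl dp D1(3) D2(3) D3(3) nme by simp
    qed
    show ?thesis unfolding XC by (rule step1[OF n1 m2 fp van dPs dQs])
  qed
  have "f (X 0) = 0"
    by (rule vanish_curve[OF fp pctX, of "\<lambda>s. s \<noteq> 0"]) (use Xs in auto)
  then show ?thesis unfolding X0 .
qed

theorem mainTheorem2:
  fixes n m :: nat
  assumes "n \<ge> 1" and "m \<le> n div 2"
  shows "zariski_closure_in n (Pn n :: 'a::alg_closed_field triple set) (Pmu n m)
           = (\<Union>i \<in> {0..m}. Pmu n i)"
proof
  show "zariski_closure_in n (Pn n :: 'a triple set) (Pmu n m) \<subseteq> (\<Union>i \<in> {0..m}. Pmu n i)"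
    by (rule partA)
next
  have m2: "2 * m \<le> n" using assms(2) by linarith
  show "(\<Union>i \<in> {0..m}. Pmu n i) \<subseteq> zariski_closure_in n (Pn n :: 'a triple set) (Pmu n m)"
  proof
    fix y :: "'a triple" assume "y \<in> (\<Union>i \<in> {0..m}. Pmu n i)"
    then obtain i where yi: "y \<in> Pmu n i" and im: "i \<le> m" by auto
    have yP: "y \<in> Pn n" using yi unfolding Pmu_def by auto
    have yK: "y \<in> Kn3 n" using yP Pn_Kn3 by blast
    show "y \<in> zariski_closure_in n (Pn n) (Pmu n m)"
      unfolding zariski_closure_in_def
    proof
      fix W :: "'a triple set" assume "W \<in> {Pn n \<inter> Z | Z. zariski_closed n Z \<and> Pmu n m \<subseteq> Pn n \<inter> Z}"
      then obtain Z where W: "W = Pn n \<inter> Z" and Zc: "zariski_closed n Z" and sub: "Pmu n m \<subseteq> Pn n \<inter> Z"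
        by blast
      obtain F :: "('a triple \<Rightarrow> 'a) set" where F: "F \<subseteq> polyfun n" and Z: "Z = {x \<in> Kn3 n. \<forall>f\<in>F. f x = 0}"
        using Zc unfolding zariski_closed_def by blast
      have "\<forall>f\<in>F. f y = 0"
      proof
        fix f assume fF: "f \<in> F"
        have fp: "f \<in> polyfun n" using fF F by blast
        have van: "\<And>x. x \<in> Pmu n m \<Longrightarrow> f x = 0" using sub fF unfolding Z by blast
        show "f y = 0" by (rule stepB[OF assms(1) m2 fp van yi im])
      qed
      then show "y \<in> W" unfolding W Z using yP yK by blast
    qed
  qed
qed

end
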